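(* Let $H$ be an almost-breakable monoid. Then: (i) the irreducibles of $\mathcal{P}_{\mathrm{fin},1}(H)$ are precisely the $2$-element subsets of $H$ containing $1_H$; (ii) every element of $\mathcal{P}_{\mathrm{fin},1}(H)$ admits a square-free factorization into irreducibles, i.e. a factorization in which no irreducible occurs more than once as a letter.
   Context: A monoid $H$ is almost-breakable if for all $x,y\in H$, $xy\in\{x,y\}$ or $yx\in\{x,y\}$. $\mathcal{P}_{\mathrm{fin},1}(H)$ denotes the set of non-empty finite subsets of $H$ containing $1_H$, a monoid under $XY=\{xy:x\in X,y\in Y\}$ with identity $\{1_H\}$. In a monoid $M$: $x\mid_M y$ iff $y\in MxM$; $x,y$ are associated if each divides the other; proper divisor means divides but not associated. A unit-divisor divides $1_M$; otherwise it is a non-unit-divisor. An irreducible is a non-unit-divisor $a$ with $a\neq xy$ for all non-unit-divisors $x,y$ properly dividing $a$. A factorization of an element $X$ is a finite word (possibly empty, for the identity) over the irreducibles whose product is $X$. *)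

theory Defs
  imports Main
begin

definition almost_breakable :: "'a::monoid_mult itself \<Rightarrow> bool" where
  "almost_breakable _ \<longleftrightarrow> (\<forall>x y::'a. x * y \<in> {x, y} \<or> y * x \<in> {x, y})"

definition Pfin1 :: "'a::monoid_mult set set" where
  "Pfin1 = {X. finite X \<and> X \<noteq> {} \<and> 1 \<in> X}"

definition setmul :: "'a::monoid_mult set \<Rightarrow> 'a set \<Rightarrow> 'a set" where
  "setmul X Y = {x * y | x y. x \<in> X \<and> y \<in> Y}"

definition pdvd :: "'a::monoid_mult set \<Rightarrow> 'a set \<Rightarrow> bool" where
  "pdvd X Y \<longleftrightarrow> (\<exists>A\<in>Pfin1. \<exists>B\<in>Pfin1. Y = setmul (setmul A X) B)"

definition passoc :: "'a::monoid_mult set \<Rightarrow> 'a set \<Rightarrow> bool" where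
  "passoc X Y \<longleftrightarrow> pdvd X Y \<and> pdvd Y X"

definition proper_pdvd :: "'a::monoid_mult set \<Rightarrow> 'a set \<Rightarrow> bool" where
  "proper_pdvd X Y \<longleftrightarrow> pdvd X Y \<and> \<not> passoc X Y"

definition non_unit_divisor :: "'a::monoid_mult set \<Rightarrow> bool" where
  "non_unit_divisor X \<longleftrightarrow> X \<in> Pfin1 \<and> \<not> pdvd X {1}"

definition pirreducible :: "'a::monoid_mult set \<Rightarrow> bool" where
  "pirreducible A \<longleftrightarrow> non_unit_divisor A \<and>
     (\<forall>X Y. non_unit_divisor X \<and> non_unit_divisor Y \<and> proper_pdvd X A \<and> proper_pdvd Y A
        \<longrightarrow> A \<noteq> setmul X Y)"

definition setprod :: "'a::monoid_mult set list \<Rightarrow> 'a set" where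
  "setprod xs = foldr setmul xs {1}"

definition is_factorization :: "'a::monoid_mult set list \<Rightarrow> 'a set \<Rightarrow> bool" where
  "is_factorization xs X \<longleftrightarrow> (\<forall>A\<in>set xs. pirreducible A) \<and> setprod xs = X"

end

theory Submission
  imports Defs
begin

lemma ab_unf:
  assumes "almost_breakable TYPE('a::monoid_mult)"
  shows "(x::'a)*y = x \<or> x*y = y \<or> y*x = x \<or> y*x = y"
  using assms unfolding almost_breakable_def by blast

lemma ab_idem:
  assumes "almost_breakable TYPE('a::monoid_mult)"
  shows "(x::'a)*x = x"
  using ab_unf[OF assms, of x x] by auto

lemma band_trans:
  fixes x s t :: "'a::monoid_mult"
  assumes idem: "\<And>x::'a. x*x = x"
  and "x*s*x = x" "s*t*s = s"
  shows "x*t*x = x"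
  using assms by (metis (no_types, lifting) mult.assoc)

lemma jmin:
  assumes AB: "almost_breakable TYPE('a::monoid_mult)"
  and "finite (S::'a set)" "S \<noteq> {}"
  shows "\<exists>s\<in>S. \<forall>t\<in>S. s*t*s = s"
  using assms(2,3)
proof (induction S rule: finite_ne_induct)
  case (singleton x)
  then show ?case using ab_idem[OF AB] by simp
next
  case (insert x F)
  then obtain s where s: "s \<in> F" "\<forall>t\<in>F. s*t*s = s" by blast
  have idem: "\<And>x::'a. x*x = x" using ab_idem[OF AB] .
  show ?case
  proof (cases "s*x*s = s")
    case True
    then show ?thesis using s by auto
  next
    case False
    have "x*s*x = x" using ab_unf[OF AB, of s x] False idem
      by (metis mult.assoc)
    then have "\<forall>t\<in>insert x F. x*t*x = x"
      using s band_trans[OF idem] idem by (metis insert_iff mult.assoc)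
    then show ?thesis by blast
  qed
qed

lemma split_pt:
  fixes s t :: "'a::monoid_mult"
  assumes AB: "almost_breakable TYPE('a::monoid_mult)"
  and "s*t*s = s"
  shows "s*t = s \<or> t*s = s"
  using ab_unf[OF AB] ab_idem[OF AB] assms(2) by (metis mult.assoc)

lemma split_no:
  fixes s t u :: "'a::monoid_mult"
  assumes AB: "almost_breakable TYPE('a::monoid_mult)"
  and "t*s = s" "s*t \<noteq> s" "s*u = s" "u*s \<noteq> s"
  shows False
proof -
  have ab: "\<And>x y::'a. x*y = x \<or> x*y = y \<or> y*x = x \<or> y*x = y" using ab_unf[OF AB] .
  have idem: "\<And>x::'a. x*x = x" using ab_idem[OF AB] .
  show False using ab idem assms(2-) by (smt (verit, best) mult.assoc)
qed

lemma split_ex: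
  assumes AB: "almost_breakable TYPE('a::monoid_mult)"
  and "finite (S::'a set)" "S \<noteq> {}"
  shows "\<exists>s\<in>S. (\<forall>t\<in>S. s*t = s) \<or> (\<forall>t\<in>S. t*s = s)"
proof -
  obtain s where s: "s \<in> S" "\<forall>t\<in>S. s*t*s = s" using jmin[OF assms] by blast
  have "(\<forall>t\<in>S. s*t = s) \<or> (\<forall>t\<in>S. t*s = s)"
  proof (rule ccontr)
    assume "\<not> ?thesis"
    then obtain t u where tu: "t \<in> S" "s*t \<noteq> s" "u \<in> S" "u*s \<noteq> s" by blast
    have "t*s = s" using split_pt[OF AB, of s t] s tu by auto
    moreover have "s*u = s" using split_pt[OF AB, of s u] s tu by auto
    ultimately show False using split_no[OF AB] tu by blast
  qed
  then show ?thesis using s by blast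
qed

lemma setmul_assoc: "setmul (setmul X Y) Z = setmul X (setmul Y Z)"
  unfolding setmul_def by (auto simp: mult.assoc) (metis mult.assoc)+

lemma setmul_1l[simp]: "setmul {1} X = X"
  unfolding setmul_def by auto

lemma setmul_1r[simp]: "setmul X {1} = X"
  unfolding setmul_def by auto

lemma foldr_setmul: "foldr setmul xs B = setmul (foldr setmul xs {1}) B"
  by (induction xs) (auto simp: setmul_assoc)

lemma setprod_snoc: "setprod (xs @ [B]) = setmul (setprod xs) B"
  unfolding setprod_def using foldr_setmul by simp

lemma setprod_cons: "setprod (B # xs) = setmul B (setprod xs)"
  unfolding setprod_def by simp

lemma pdvd_subset: "pdvd X Y \<Longrightarrow> X \<subseteq> Y"
  unfolding pdvd_def Pfin1_def setmul_def by force

lemma pdvd_refl: "pdvd X X"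
  unfolding pdvd_def by (rule bexI[of _ "{1}"], rule bexI[of _ "{1}"]) (auto simp: Pfin1_def)

lemma nud_iff: "non_unit_divisor X \<longleftrightarrow> X \<in> Pfin1 \<and> X \<noteq> {1}"
  unfolding non_unit_divisor_def using pdvd_subset pdvd_refl
  by (auto simp: Pfin1_def)

lemma proper_iff: "proper_pdvd X A \<longleftrightarrow> pdvd X A \<and> X \<noteq> A"
  unfolding proper_pdvd_def passoc_def using pdvd_subset pdvd_refl by blast

lemma irr2:
  assumes "(a::'a::monoid_mult) \<noteq> 1"
  shows "pirreducible {1, a}"
  unfolding pirreducible_def nud_iff proper_iff
  using assms pdvd_subset by (auto simp: Pfin1_def)

lemma left_mul:
  assumes "A \<in> Pfin1" "s \<in> A" "s \<noteq> 1" "\<forall>t\<in>A. s*t = s"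
  shows "setmul {1, s} (A - {s}) = A"
proof
  show "setmul {1, s} (A - {s}) \<subseteq> A" using assms unfolding setmul_def by auto
  show "A \<subseteq> setmul {1, s} (A - {s})"
  proof
    fix a assume a: "a \<in> A"
    have one: "1 \<in> A - {s}" using assms unfolding Pfin1_def by auto
    show "a \<in> setmul {1, s} (A - {s})"
    proof (cases "a = s")
      case True
      then have "a = s * 1" by simp
      then show ?thesis unfolding setmul_def using one by blast
    next
      case False
      then have "a = 1 * a" by simp
      then show ?thesis unfolding setmul_def using a False by blast
    qed
  qed
qed

lemma right_mul:
  assumes "A \<in> Pfin1" "s \<in> A" "s \<noteq> 1" "\<forall>t\<in>A. t*s = s"
  shows "setmul (A - {s}) {1, s} = A"
proof
  show "setmul (A - {s}) {1, s} \<subseteq> A" using assms unfolding setmul_def by auto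
  show "A \<subseteq> setmul (A - {s}) {1, s}"
  proof
    fix a assume a: "a \<in> A"
    have one: "1 \<in> A - {s}" using assms unfolding Pfin1_def by auto
    show "a \<in> setmul (A - {s}) {1, s}"
    proof (cases "a = s")
      case True
      then have "a = 1 * s" by simp
      then show ?thesis unfolding setmul_def using one by blast
    next
      case False
      then have "a = a * 1" by simp
      then show ?thesis unfolding setmul_def using a False by blast
    qed
  qed
qed

lemma fact_ex:
  assumes AB: "almost_breakable TYPE('a::monoid_mult)"
  shows "(A::'a set) \<in> Pfin1 \<Longrightarrow> \<exists>xs. (\<forall>B\<in>set xs. \<exists>a. a \<noteq> 1 \<and> a \<in> A \<and> B = {1,a}) \<and> setprod xs = A \<and> distinct xs"
proof (induction "card A" arbitrary: A rule: less_induct)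
  case less
  show ?case
  proof (cases "A = {1}")
    case True
    then show ?thesis by (intro exI[of _ "[]"]) (auto simp: setprod_def)
  next
    case False
    have fin: "finite A" "1 \<in> A" using less.prems by (auto simp: Pfin1_def)
    then have ne: "A - {1} \<noteq> {}" using False by auto
    obtain s where s: "s \<in> A - {1}" "(\<forall>t\<in>A - {1}. s*t = s) \<or> (\<forall>t\<in>A - {1}. t*s = s)"
      using split_ex[OF AB _ ne] fin by auto
    define A' where "A' = A - {s}"
    have A'P: "A' \<in> Pfin1" using fin s unfolding A'_def Pfin1_def by auto
    have "card A' < card A" unfolding A'_def using fin s by (intro card_Diff1_less) auto
    then obtain xs where xs: "\<forall>B\<in>set xs. \<exists>a. a \<noteq> 1 \<and> a \<in> A' \<and> B = {1,a}" "setprod xs = A'" "distinct xs"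
      using less.hyps A'P by blast
    have notin: "{1,s} \<notin> set xs"
    proof
      assume "{1,s} \<in> set xs"
      then obtain a where "a \<noteq> 1" "a \<in> A'" "{1,s} = {1,a}" using xs(1) by blast
      then have "a = s" using s by (auto simp: doubleton_eq_iff)
      then show False using \<open>a \<in> A'\<close> unfolding A'_def by auto
    qed
    have xsA: "\<forall>B\<in>set xs. \<exists>a. a \<noteq> 1 \<and> a \<in> A \<and> B = {1,a}" using xs(1) unfolding A'_def by blast
    from s(2) show ?thesis
    proof
      assume h: "\<forall>t\<in>A - {1}. s*t = s"
      then have "\<forall>t\<in>A. s*t = s" by auto
      then have "setmul {1, s} A' = A" unfolding A'_def using left_mul less.prems s by auto
      then show ?thesis using xs xsA notin s
        by (intro exI[of _ "{1,s} # xs"]) (auto simp: setprod_cons)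
    next
      assume h: "\<forall>t\<in>A - {1}. t*s = s"
      then have "\<forall>t\<in>A. t*s = s" by auto
      then have "setmul A' {1, s} = A" unfolding A'_def using right_mul less.prems s by auto
      then show ?thesis using xs xsA notin s
        by (intro exI[of _ "xs @ [{1,s}]"]) (auto simp: setprod_snoc)
    qed
  qed
qed

lemma irr_form:
  assumes AB: "almost_breakable TYPE('a::monoid_mult)"
  and AP: "(A::'a set) \<in> Pfin1" and irr: "pirreducible A"
  shows "\<exists>a. A = {1, a} \<and> a \<noteq> 1"
proof -
  have fin: "finite A" "1 \<in> A" using AP by (auto simp: Pfin1_def)
  have "non_unit_divisor A" using irr unfolding pirreducible_def by blast
  then have "A \<noteq> {1}" unfolding nud_iff by blast
  then have ne: "A - {1} \<noteq> {}" using fin by auto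
  obtain s where s: "s \<in> A - {1}" "(\<forall>t\<in>A - {1}. s*t = s) \<or> (\<forall>t\<in>A - {1}. t*s = s)"
    using split_ex[OF AB _ ne] fin by auto
  show ?thesis
  proof (rule ccontr)
    assume nf: "\<not> ?thesis"
    then have AX: "A \<noteq> {1, s}" using s by auto
    define X where "X = {1::'a, s}"
    define Y where "Y = A - {s}"
    have XP: "non_unit_divisor X" unfolding nud_iff X_def Pfin1_def using s by auto
    have Y1: "Y \<noteq> {1}"
    proof
      assume "Y = {1}"
      then have "A = {1, s}" using s unfolding Y_def by blast
      then show False using AX by simp
    qed
    have "finite Y" "1 \<in> Y" using fin s unfolding Y_def by auto
    then have YP: "non_unit_divisor Y" unfolding nud_iff Pfin1_def using Y1 by auto
    have XA: "X \<noteq> A" using AX unfolding X_def by simp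
    have YA: "Y \<noteq> A" using s unfolding Y_def by blast
    have YPf: "Y \<in> Pfin1" using YP nud_iff by auto
    have XPf: "X \<in> Pfin1" using XP nud_iff by auto
    have oneP: "{1} \<in> Pfin1" by (auto simp: Pfin1_def)
    from s(2) show False
    proof
      assume "\<forall>t\<in>A - {1}. s*t = s"
      then have "\<forall>t\<in>A. s*t = s" by auto
      then have eq: "setmul X Y = A" unfolding X_def Y_def using left_mul AP s by auto
      have "pdvd X A" unfolding pdvd_def
        by (rule bexI[of _ "{1}"], rule bexI[of _ Y]) (use eq oneP YPf in auto)
      moreover have "pdvd Y A" unfolding pdvd_def
        by (rule bexI[of _ X], rule bexI[of _ "{1}"]) (use eq oneP XPf in auto)
      moreover have "\<forall>X Y. non_unit_divisor X \<and> non_unit_divisor Y \<and> proper_pdvd X A \<and> proper_pdvd Y A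
        \<longrightarrow> A \<noteq> setmul X Y" using irr unfolding pirreducible_def by blast
      ultimately show False using XP YP XA YA eq unfolding proper_iff by blast
    next
      assume "\<forall>t\<in>A - {1}. t*s = s"
      then have "\<forall>t\<in>A. t*s = s" by auto
      then have eq: "setmul Y X = A" unfolding X_def Y_def using right_mul AP s by auto
      have "pdvd X A" unfolding pdvd_def
        by (rule bexI[of _ Y], rule bexI[of _ "{1}"]) (use eq oneP YPf in auto)
      moreover have "pdvd Y A" unfolding pdvd_def
        by (rule bexI[of _ "{1}"], rule bexI[of _ X]) (use eq oneP XPf in auto)
      moreover have "\<forall>X Y. non_unit_divisor X \<and> non_unit_divisor Y \<and> proper_pdvd X A \<and> proper_pdvd Y A
        \<longrightarrow> A \<noteq> setmul X Y" using irr unfolding pirreducible_def by blast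
      ultimately show False using XP YP XA YA eq unfolding proper_iff by blast
    qed
  qed
qed

theorem proposition4p2:
  assumes "almost_breakable TYPE('a::monoid_mult)"
  shows "{A \<in> (Pfin1 :: 'a set set). pirreducible A} = {{1, a} | a. a \<noteq> 1} \<and>
         (\<forall>X \<in> (Pfin1 :: 'a set set). \<exists>xs. is_factorization xs X \<and> distinct xs)"
proof
  show "{A \<in> (Pfin1 :: 'a set set). pirreducible A} = {{1, a} | a. a \<noteq> 1}"
  proof
    show "{A \<in> (Pfin1 :: 'a set set). pirreducible A} \<subseteq> {{1, a} | a. a \<noteq> 1}"
    proof
      fix A assume "A \<in> {A \<in> (Pfin1 :: 'a set set). pirreducible A}"
      then have "A \<in> Pfin1" "pirreducible A" by auto
      then obtain a where "A = {1, a}" "a \<noteq> 1" using irr_form[OF assms] by blast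
      then show "A \<in> {{1, a} | a. a \<noteq> 1}" by blast
    qed
    show "{{1, a} | a. a \<noteq> 1} \<subseteq> {A \<in> (Pfin1 :: 'a set set). pirreducible A}"
    proof
      fix A assume "A \<in> {{1, a} | a::'a. a \<noteq> 1}"
      then obtain a :: 'a where "A = {1, a}" "a \<noteq> 1" by blast
      then show "A \<in> {A \<in> (Pfin1 :: 'a set set). pirreducible A}" using irr2 by (simp add: Pfin1_def)
    qed
  qed
  show "\<forall>X \<in> (Pfin1 :: 'a set set). \<exists>xs. is_factorization xs X \<and> distinct xs"
  proof
    fix X :: "'a set" assume "X \<in> Pfin1"
    then obtain xs where xs: "\<forall>B\<in>set xs. \<exists>a. a \<noteq> 1 \<and> a \<in> X \<and> B = {1,a}" "setprod xs = X" "distinct xs"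
      using fact_ex[OF assms \<open>X \<in> Pfin1\<close>] by (elim exE conjE) simp
    have "\<forall>A\<in>set xs. pirreducible A"
    proof
      fix B assume "B \<in> set xs"
      then obtain a where "a \<noteq> 1" "B = {1, a}" using xs(1) by blast
      then show "pirreducible B" using irr2 by simp
    qed
    then have "is_factorization xs X" unfolding is_factorization_def using xs(2) by simp
    then show "\<exists>xs. is_factorization xs X \<and> distinct xs" using xs by blast
  qed
qed

end
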